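(* Let $\mathcal S$ be a trajectory set satisfying (LOP) and (K). Then there is no generalized portfolio which is an arbitrage with respect to the $\|\cdot\|$-null sets.
   Context: Fix $s_0\in\mathbb R$. A trajectory set is any set $\mathcal S$ of real sequences $S=(S_j)_{j\in\mathbb N_0}$ with $S_0=s_0$. A simple portfolio $(V,n,H)$ consists of $V\in\mathbb R$, $n\in\mathbb N$ and nonanticipating functions $H_i:\mathcal S\to\mathbb R$, $0\le i\le n-1$ (i.e. $H_i(S)=h_i(S_0,\dots,S_i)$ for some arbitrary $h_i:\mathbb R^{i+1}\to\mathbb R$). Its wealth is $\Pi^{V,n,H}_j(S)=V+\sum_{i=0}^{\min\{j,n\}-1}H_i(S)(S_{i+1}-S_i)$ and $\Pi^{V,n,H}_\infty:=\Pi^{V,n,H}_n$; it is positive if $V\ge0$ and $\Pi^{V,n,H}_\infty\ge0$ on $\mathcal S$. A generalized portfolio is a sequence $(V_m,n_m,H_m)_{m\in\mathbb N_0}$ of simple portfolios, positive for every $m\ge1$; it is a positive generalized portfolio if moreover $\Pi^{V_0,n_0,H_0}_j\equiv0$ for all $j$. A map $f:\mathcal S\to[-\infty,+\infty]$ is superhedged with initial endowment $V=\sum_{m=0}^\infty V_m$ by such a portfolio if $f\le\sum_{m=0}^\infty\Pi^{V_m,n_m,H_m}_\infty$ on $\mathcal S$. For $f\ge0$, $\bar I(f)$ is the infimum of initial endowments of positive generalized portfolios superhedging $f$. Let $\mathcal E=\{\Pi^{V,n,H}_\infty\}$ over all simple portfolios. (LOP): whenever two simple portfolios have equal terminal wealth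 $\Pi_\infty$ at every $S\in\mathcal S$, their initial endowments coincide; under (LOP), $I:\mathcal E\to\mathbb R$, $I(\Pi^{V,n,H}_\infty)=V$, is well defined. (K): $I(f)+\bar I(f^-)\le\bar I(f^+)$ for every $f\in\mathcal E$ ($f^\pm$ positive/negative parts). Define $\|f\|:=\bar I(|f|)$; a null set is $A\subseteq\mathcal S$ with $\|\mathbf 1_A\|=0$. A generalized portfolio $(V_m,n_m,H_m)_{m\in\mathbb N_0}$ is an arbitrage with respect to the $\|\cdot\|$-null sets if $\sum_{m=0}^\infty V_m=0$, the set $\{S:\sum_{m=0}^\infty\Pi^{V_m,n_m,H_m}_\infty(S)<0\}$ is a null set, and the set $\{S:\sum_{m=0}^\infty\Pi^{V_m,n_m,H_m}_\infty(S)>0\}$ is not a null set. *)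

theory Defs
  imports "HOL-Library.Extended_Real" "HOL-Library.Indicator_Function"
begin

type_synonym traj = "nat \<Rightarrow> real"
type_synonym strategy = "nat \<Rightarrow> traj \<Rightarrow> real"
type_synonym sportf = "real \<times> nat \<times> strategy"

definition trajectory_set :: "real \<Rightarrow> traj set \<Rightarrow> bool" where
  "trajectory_set s0 \<S> \<longleftrightarrow> (\<forall>S\<in>\<S>. S 0 = s0)"

definition nonanticipating :: "traj set \<Rightarrow> nat \<Rightarrow> strategy \<Rightarrow> bool" where
  "nonanticipating \<S> n H \<longleftrightarrow>
     (\<forall>i<n. \<exists>h :: real list \<Rightarrow> real. \<forall>S\<in>\<S>. H i S = h (map S [0..<Suc i]))"

definition simple_portfolio :: "traj set \<Rightarrow> sportf \<Rightarrow> bool" where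
  "simple_portfolio \<S> p \<longleftrightarrow> (case p of (V, n, H) \<Rightarrow> n \<ge> 1 \<and> nonanticipating \<S> n H)"

definition endow :: "sportf \<Rightarrow> real" where
  "endow p = fst p"

definition wealth :: "sportf \<Rightarrow> nat \<Rightarrow> traj \<Rightarrow> real" where
  "wealth p j S = (case p of (V, n, H) \<Rightarrow>
      V + (\<Sum>i<min j n. H i S * (S (Suc i) - S i)))"

definition twealth :: "sportf \<Rightarrow> traj \<Rightarrow> real" where
  "twealth p S = wealth p (fst (snd p)) S"

definition positive_portfolio :: "traj set \<Rightarrow> sportf \<Rightarrow> bool" where
  "positive_portfolio \<S> p \<longleftrightarrow>
     simple_portfolio \<S> p \<and> endow p \<ge> 0 \<and> (\<forall>S\<in>\<S>. twealth p S \<ge> 0)"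

definition gen_portfolio :: "traj set \<Rightarrow> (nat \<Rightarrow> sportf) \<Rightarrow> bool" where
  "gen_portfolio \<S> P \<longleftrightarrow>
     simple_portfolio \<S> (P 0) \<and> (\<forall>m\<ge>1. positive_portfolio \<S> (P m))"

definition pos_gen_portfolio :: "traj set \<Rightarrow> (nat \<Rightarrow> sportf) \<Rightarrow> bool" where
  "pos_gen_portfolio \<S> P \<longleftrightarrow>
     gen_portfolio \<S> P \<and> (\<forall>j. \<forall>S\<in>\<S>. wealth (P 0) j S = 0)"

(* \<Sum>_{m\<ge>0} V_m, split as V_0 + \<Sum>_{m\<ge>1} V_m (the tail has nonnegative terms) *)
definition gen_endowment :: "(nat \<Rightarrow> sportf) \<Rightarrow> ereal" where
  "gen_endowment P = ereal (endow (P 0)) + (\<Sum>m. ereal (endow (P (Suc m))))"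

definition gen_wealth :: "(nat \<Rightarrow> sportf) \<Rightarrow> traj \<Rightarrow> ereal" where
  "gen_wealth P S = ereal (twealth (P 0) S) + (\<Sum>m. ereal (twealth (P (Suc m)) S))"

definition superhedges :: "traj set \<Rightarrow> (nat \<Rightarrow> sportf) \<Rightarrow> (traj \<Rightarrow> ereal) \<Rightarrow> bool" where
  "superhedges \<S> P f \<longleftrightarrow> (\<forall>S\<in>\<S>. f S \<le> gen_wealth P S)"

definition barI :: "traj set \<Rightarrow> (traj \<Rightarrow> ereal) \<Rightarrow> ereal" where
  "barI \<S> f = Inf {gen_endowment P | P. pos_gen_portfolio \<S> P \<and> superhedges \<S> P f}"

definition snorm :: "traj set \<Rightarrow> (traj \<Rightarrow> ereal) \<Rightarrow> ereal" where
  "snorm \<S> f = barI \<S> (\<lambda>S. \<bar>f S\<bar>)"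

definition null_set :: "traj set \<Rightarrow> traj set \<Rightarrow> bool" where
  "null_set \<S> A \<longleftrightarrow> A \<subseteq> \<S> \<and> snorm \<S> (indicator A) = 0"

definition LOP :: "traj set \<Rightarrow> bool" where
  "LOP \<S> \<longleftrightarrow> (\<forall>p q. simple_portfolio \<S> p \<and> simple_portfolio \<S> q \<and>
       (\<forall>S\<in>\<S>. twealth p S = twealth q S) \<longrightarrow> endow p = endow q)"

(* (K): I(f) + \<bar>I(f^-) \<le> \<bar>I(f^+) for f = \<Pi>_\<infinity> of a simple portfolio, I(f) = V *)
definition condK :: "traj set \<Rightarrow> bool" where
  "condK \<S> \<longleftrightarrow> (\<forall>p. simple_portfolio \<S> p \<longrightarrow>
       ereal (endow p) + barI \<S> (\<lambda>S. ereal (max 0 (- twealth p S)))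
         \<le> barI \<S> (\<lambda>S. ereal (max 0 (twealth p S))))"

definition arbitrage_null :: "traj set \<Rightarrow> (nat \<Rightarrow> sportf) \<Rightarrow> bool" where
  "arbitrage_null \<S> P \<longleftrightarrow> gen_portfolio \<S> P \<and> gen_endowment P = 0 \<and>
     null_set \<S> {S\<in>\<S>. gen_wealth P S < 0} \<and>
     \<not> null_set \<S> {S\<in>\<S>. gen_wealth P S > 0}"

end

theory Submission imports Defs "HOL-Analysis.Caratheodory" begin

lemma ereal_nonneg_enn:
  fixes g :: "'a \<Rightarrow> ereal" assumes "\<And>x. 0 \<le> g x"
  shows "g = (\<lambda>x. enn2ereal (e2ennreal (g x)))"
  using assms by (simp add: enn2ereal_e2ennreal fun_eq_iff)

lemma ereal_2dimen:
  fixes g :: "nat \<Rightarrow> nat \<Rightarrow> ereal"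
  assumes "\<And>j m. 0 \<le> g j m"
  shows "(\<Sum>k. g (fst (prod_decode k)) (snd (prod_decode k))) = (\<Sum>j. \<Sum>m. g j m)"
proof -
  define h where "h = (\<lambda>p. e2ennreal (g (fst p) (snd p)))"
  have gh: "g j m = enn2ereal (h (j, m))" for j m
    using assms by (simp add: h_def enn2ereal_e2ennreal)
  have "(\<Sum>k. h (prod_decode k)) = (\<Sum>j. \<Sum>m. h (j, m))"
    by (rule suminf_ennreal_2dimen) simp
  then have "enn2ereal (\<Sum>k. h (prod_decode k)) = enn2ereal (\<Sum>j. \<Sum>m. h (j, m))" by simp
  then show ?thesis
    by (simp add: gh prod.collapse)
qed

lemma ereal_offset:
  fixes f :: "nat \<Rightarrow> ereal"
  assumes "\<And>j. 0 \<le> f j"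
  shows "suminf f = (\<Sum>j<i. f j) + (\<Sum>j. f (j + i))"
proof -
  define h where "h = (\<lambda>j. e2ennreal (f j))"
  have fh: "f j = enn2ereal (h j)" for j
    using assms by (simp add: h_def enn2ereal_e2ennreal)
  have "suminf h = (\<Sum>j. h (j + i)) + (\<Sum>j<i. h j)"
    by (rule suminf_offset) (rule summableI)
  then have "enn2ereal (suminf h) = enn2ereal ((\<Sum>j<i. h j) + (\<Sum>j. h (j + i)))"
    by (simp add: add.commute)
  moreover have "f = (\<lambda>j. enn2ereal (h j))" using fh by auto
  ultimately show ?thesis
    by (simp add: plus_ennreal.rep_eq)
qed

lemma suminf_one_ereal: "(\<Sum>j. (1::ereal)) = \<infinity>"
proof (rule ccontr)
  assume "(\<Sum>j. (1::ereal)) \<noteq> \<infinity>"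
  moreover have "0 \<le> (\<Sum>j. (1::ereal))" by (rule suminf_0_le) simp
  ultimately obtain r where r: "(\<Sum>j. (1::ereal)) = ereal r" by (cases "(\<Sum>j. (1::ereal))") auto
  obtain n :: nat where n: "r < real n" using reals_Archimedean2 by blast
  have "(\<Sum>j<n. (1::ereal)) \<le> (\<Sum>j. 1)" by (rule suminf_upper) simp
  moreover have "(\<Sum>j<n. (1::ereal)) = ereal (real n)"
    by (induction n) (simp_all add: one_ereal_def)
  ultimately have "ereal (real n) \<le> ereal r" using r by simp
  then show False using n by simp
qed


definition zp :: sportf where "zp = (0, 1, \<lambda>i S. 0)"
definition cstp :: "real \<Rightarrow> sportf" where "cstp c = (c, 1, \<lambda>i S. 0)"
definition scl :: "real \<Rightarrow> sportf \<Rightarrow> sportf" where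
  "scl c p = (c * fst p, fst (snd p), \<lambda>i S. c * snd (snd p) i S)"
definition mrg :: "sportf \<Rightarrow> sportf \<Rightarrow> sportf" where
  "mrg p q = (fst p + fst q, max (fst (snd p)) (fst (snd q)),
     \<lambda>i S. (if i < fst (snd p) then snd (snd p) i S else 0) + (if i < fst (snd q) then snd (snd q) i S else 0))"

lemma tw: "twealth (V, n, H) S = V + (\<Sum>i<n. H i S * (S (Suc i) - S i))"
  by (simp add: twealth_def wealth_def)

lemma tw_zp[simp]: "twealth zp S = 0" by (simp add: zp_def tw)
lemma w_zp[simp]: "wealth zp j S = 0" by (simp add: zp_def wealth_def)
lemma endow_zp[simp]: "endow zp = 0" by (simp add: zp_def endow_def)
lemma simple_zp[simp]: "simple_portfolio \<S> zp"
  by (auto simp: zp_def simple_portfolio_def nonanticipating_def)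
lemma pos_zp[simp]: "positive_portfolio \<S> zp"
  by (simp add: positive_portfolio_def)

lemma tw_cst[simp]: "twealth (cstp c) S = c" by (simp add: cstp_def tw)
lemma endow_cst[simp]: "endow (cstp c) = c" by (simp add: cstp_def endow_def)
lemma simple_cst[simp]: "simple_portfolio \<S> (cstp c)"
  by (auto simp: cstp_def simple_portfolio_def nonanticipating_def)

lemma tw_scl[simp]: "twealth (scl c p) S = c * twealth p S"
  by (cases p) (simp add: scl_def tw sum_distrib_left algebra_simps)
lemma endow_scl[simp]: "endow (scl c p) = c * endow p"
  by (simp add: scl_def endow_def)
lemma simple_scl: "simple_portfolio \<S> p \<Longrightarrow> simple_portfolio \<S> (scl c p)"
proof (cases p)
  case (fields V n H)
  assume "simple_portfolio \<S> p"
  then have "n \<ge> 1" and na: "\<forall>i<n. \<exists>h. \<forall>S\<in>\<S>. H i S = h (map S [0..<Suc i])"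
    using fields by (auto simp: simple_portfolio_def nonanticipating_def)
  have "\<forall>i<n. \<exists>h. \<forall>S\<in>\<S>. c * H i S = h (map S [0..<Suc i])"
  proof (intro allI impI)
    fix i assume "i < n"
    then obtain h where "\<forall>S\<in>\<S>. H i S = h (map S [0..<Suc i])" using na by blast
    then show "\<exists>h. \<forall>S\<in>\<S>. c * H i S = h (map S [0..<Suc i])"
      by (intro exI[of _ "\<lambda>xs. c * h xs"]) simp
  qed
  then show ?thesis using fields \<open>n \<ge> 1\<close>
    by (simp add: scl_def simple_portfolio_def nonanticipating_def)
qed
lemma pos_scl: "positive_portfolio \<S> p \<Longrightarrow> c \<ge> 0 \<Longrightarrow> positive_portfolio \<S> (scl c p)"
  by (auto simp: positive_portfolio_def simple_scl)

lemma sum_restr: "(n::nat) \<le> N \<Longrightarrow> (\<Sum>i<N. (if i < n then a i else 0) * (b i::real)) = (\<Sum>i<n. a i * b i)"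
proof -
  assume "n \<le> N"
  have "(\<Sum>i<N. (if i < n then a i else 0) * b i) = (\<Sum>i<n. (if i < n then a i else 0) * b i)"
    using \<open>n \<le> N\<close> by (intro sum.mono_neutral_right) auto
  then show ?thesis by simp
qed

lemma tw_mrg[simp]: "twealth (mrg p q) S = twealth p S + twealth q S"
proof (cases p, cases q)
  fix V n H V' n' H' assume p: "p = (V, n, H)" and q: "q = (V', n', H')"
  have "twealth (mrg p q) S = V + V' + (\<Sum>i<max n n'. (if i < n then H i S else 0) * (S (Suc i) - S i)
      + (if i < n' then H' i S else 0) * (S (Suc i) - S i))"
    by (simp add: p q mrg_def tw distrib_right cong: if_cong)
  also have "\<dots> = V + V' + (\<Sum>i<n. H i S * (S (Suc i) - S i)) + (\<Sum>i<n'. H' i S * (S (Suc i) - S i))"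
    by (simp add: sum.distrib sum_restr)
  finally show ?thesis by (simp add: p q tw)
qed
lemma endow_mrg[simp]: "endow (mrg p q) = endow p + endow q"
  by (simp add: mrg_def endow_def)
lemma simple_mrg: "simple_portfolio \<S> p \<Longrightarrow> simple_portfolio \<S> q \<Longrightarrow> simple_portfolio \<S> (mrg p q)"
proof (cases p, cases q)
  fix V n H V' n' H' assume p: "p = (V, n, H)" and q: "q = (V', n', H')"
  assume "simple_portfolio \<S> p" "simple_portfolio \<S> q"
  then have n1: "n \<ge> 1" and na: "\<forall>i<n. \<exists>h. \<forall>S\<in>\<S>. H i S = h (map S [0..<Suc i])"
    and na': "\<forall>i<n'. \<exists>h. \<forall>S\<in>\<S>. H' i S = h (map S [0..<Suc i])"
    using p q by (auto simp: simple_portfolio_def nonanticipating_def)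
  have "\<forall>i<max n n'. \<exists>h. \<forall>S\<in>\<S>. (if i < n then H i S else 0) + (if i < n' then H' i S else 0) = h (map S [0..<Suc i])"
  proof (intro allI impI)
    fix i
    obtain h1 where h1: "i < n \<Longrightarrow> \<forall>S\<in>\<S>. H i S = h1 (map S [0..<Suc i])" using na by blast
    obtain h2 where h2: "i < n' \<Longrightarrow> \<forall>S\<in>\<S>. H' i S = h2 (map S [0..<Suc i])" using na' by blast
    show "\<exists>h. \<forall>S\<in>\<S>. (if i < n then H i S else 0) + (if i < n' then H' i S else 0) = h (map S [0..<Suc i])"
      by (intro exI[of _ "\<lambda>xs. (if i < n then h1 xs else 0) + (if i < n' then h2 xs else 0)"]) (simp add: h1 h2)
  qed
  moreover have "max n n' \<ge> 1" using n1 by simp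
  ultimately show ?thesis unfolding p q mrg_def simple_portfolio_def nonanticipating_def fst_conv snd_conv prod.case
    by blast
qed


lemma pg_P0:
  assumes "pos_gen_portfolio \<S> P" "S \<in> \<S>"
  shows "endow (P 0) = 0" "twealth (P 0) S = 0"
proof -
  have "wealth (P 0) j S = 0" for j using assms by (auto simp: pos_gen_portfolio_def)
  from this[of 0] show "endow (P 0) = 0"
    by (cases "P 0") (simp add: wealth_def endow_def)
  show "twealth (P 0) S = 0" using \<open>\<And>j. wealth (P 0) j S = 0\<close> by (simp add: twealth_def)
qed

lemma pg_pos:
  assumes "pos_gen_portfolio \<S> P"
  shows "endow (P (Suc m)) \<ge> 0" "S \<in> \<S> \<Longrightarrow> twealth (P (Suc m)) S \<ge> 0"
  using assms by (auto simp: pos_gen_portfolio_def gen_portfolio_def positive_portfolio_def)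

lemma pg_endow:
  assumes "pos_gen_portfolio \<S> P" "\<S> \<noteq> {}"
  shows "gen_endowment P = (\<Sum>m. ereal (endow (P (Suc m))))"
  using assms pg_P0(1)[OF assms(1)] by (auto simp: gen_endowment_def)

lemma pg_wealth:
  assumes "pos_gen_portfolio \<S> P" "S \<in> \<S>"
  shows "gen_wealth P S = (\<Sum>m. ereal (twealth (P (Suc m)) S))"
  using pg_P0(2)[OF assms] by (simp add: gen_wealth_def)

lemma barI_nonneg:
  assumes "\<S> \<noteq> {}" shows "0 \<le> barI \<S> f"
  unfolding barI_def
proof (rule Inf_greatest, clarify)
  fix P assume "pos_gen_portfolio \<S> P" "superhedges \<S> P f"
  then show "0 \<le> gen_endowment P"
    using assms by (simp add: pg_endow suminf_0_le pg_pos)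
qed

lemma barI_mono:
  assumes "\<And>S. S \<in> \<S> \<Longrightarrow> f S \<le> g S" shows "barI \<S> f \<le> barI \<S> g"
  unfolding barI_def
  by (rule Inf_superset_mono) (auto simp: superhedges_def intro: order_trans[OF assms])

lemma barI_le:
  assumes "pos_gen_portfolio \<S> P" "superhedges \<S> P f"
  shows "barI \<S> f \<le> gen_endowment P"
  unfolding barI_def using assms by (auto intro: Inf_lower)


lemma barI_countable:
  assumes ne: "\<S> \<noteq> {}" and nn: "\<And>j S. S \<in> \<S> \<Longrightarrow> 0 \<le> f j S"
  shows "barI \<S> (\<lambda>S. \<Sum>j. f j S) \<le> (\<Sum>j. barI \<S> (f j))"
proof (cases "(\<Sum>j. barI \<S> (f j)) = \<infinity>")
  case True then show ?thesis by simp
next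
  case False
  have fin: "barI \<S> (f j) \<noteq> \<infinity>" for j
    using suminf_PInfty[OF barI_nonneg[OF ne] False] .
  show ?thesis
  proof (rule ereal_le_epsilon2)
    fix e :: real assume "0 < e"
    have "\<exists>P. pos_gen_portfolio \<S> P \<and> superhedges \<S> P (f j) \<and>
            gen_endowment P < barI \<S> (f j) + ereal (e * (1/2)^Suc j)" for j
    proof -
      have pe: "0 < e * (1/2)^Suc j" using \<open>0 < e\<close> by simp
      obtain r where r: "barI \<S> (f j) = ereal r"
        using fin[of j] barI_nonneg[OF ne, of "f j"] by (cases "barI \<S> (f j)") auto
      have "barI \<S> (f j) < barI \<S> (f j) + ereal (e * (1/2)^Suc j)"
        using pe r by simp
      then show ?thesis unfolding barI_def[of \<S> "f j"] by (subst (asm) Inf_less_iff) blast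
    qed
    then obtain PP where PP: "\<And>j. pos_gen_portfolio \<S> (PP j)" "\<And>j. superhedges \<S> (PP j) (f j)"
      "\<And>j. gen_endowment (PP j) < barI \<S> (f j) + ereal (e * (1/2)^Suc j)"
      by metis
    define Q where "Q k = (if k = 0 then zp else PP (fst (prod_decode (k - 1))) (Suc (snd (prod_decode (k-1)))))" for k
    have Q0: "Q 0 = zp" and QS: "Q (Suc k) = PP (fst (prod_decode k)) (Suc (snd (prod_decode k)))" for k
      by (simp_all add: Q_def)
    have Qpg: "pos_gen_portfolio \<S> Q"
      unfolding pos_gen_portfolio_def gen_portfolio_def
    proof (intro conjI allI impI ballI)
      show "simple_portfolio \<S> (Q 0)" by (simp add: Q0)
      fix m :: nat assume "1 \<le> m"
      then obtain k where "m = Suc k" by (cases m) auto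
      then show "positive_portfolio \<S> (Q m)"
        using PP(1) by (auto simp: QS pos_gen_portfolio_def gen_portfolio_def)
    next
      fix j S show "wealth (Q 0) j S = 0" by (simp add: Q0)
    qed
    have "gen_endowment Q = (\<Sum>k. ereal (endow (Q (Suc k))))"
      by (simp add: gen_endowment_def Q0)
    also have "\<dots> = (\<Sum>j. \<Sum>m. ereal (endow (PP j (Suc m))))"
      unfolding QS by (rule ereal_2dimen[where g="\<lambda>j m. ereal (endow (PP j (Suc m)))"]) (simp add: pg_pos[OF PP(1)])
    also have "\<dots> = (\<Sum>j. gen_endowment (PP j))"
      by (simp add: pg_endow[OF PP(1) ne])
    also have "\<dots> \<le> (\<Sum>j. barI \<S> (f j) + ereal (e * (1/2)^Suc j))"
    proof (rule suminf_le_pos)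
      fix N show "gen_endowment (PP N) \<le> barI \<S> (f N) + ereal (e * (1/2)^Suc N)"
        using PP(3)[of N] by (rule less_imp_le)
      show "0 \<le> gen_endowment (PP N)"
        by (simp add: pg_endow[OF PP(1) ne] suminf_0_le pg_pos[OF PP(1)])
    qed
    also have "\<dots> = (\<Sum>j. barI \<S> (f j)) + (\<Sum>j. ereal (e * (1/2)^Suc j))"
      by (rule suminf_add_ereal) (auto simp: barI_nonneg[OF ne] \<open>0 < e\<close> less_imp_le)
    also have "(\<Sum>j. ereal (e * (1/2)^Suc j)) = ereal e"
    proof -
      have "(\<lambda>j. e * (1/2::real)^Suc j) sums (e * 1)"
        by (rule sums_mult) (rule power_half_series)
      then show ?thesis by (simp add: sums_suminf_ereal)
    qed
    finally have endQ: "gen_endowment Q \<le> (\<Sum>j. barI \<S> (f j)) + ereal e" .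
    have "superhedges \<S> Q (\<lambda>S. \<Sum>j. f j S)"
      unfolding superhedges_def
    proof
      fix S assume S: "S \<in> \<S>"
      have "gen_wealth Q S = (\<Sum>k. ereal (twealth (Q (Suc k)) S))"
        by (simp add: gen_wealth_def Q0)
      also have "\<dots> = (\<Sum>j. \<Sum>m. ereal (twealth (PP j (Suc m)) S))"
        unfolding QS by (rule ereal_2dimen[where g="\<lambda>j m. ereal (twealth (PP j (Suc m)) S)"]) (simp add: pg_pos[OF PP(1)] S)
      also have "\<dots> = (\<Sum>j. gen_wealth (PP j) S)"
        by (simp add: pg_wealth[OF PP(1) S])
      finally have eq: "gen_wealth Q S = (\<Sum>j. gen_wealth (PP j) S)" .
      have "(\<Sum>j. f j S) \<le> (\<Sum>j. gen_wealth (PP j) S)"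
        by (rule suminf_le_pos) (use PP(2) S nn in \<open>auto simp: superhedges_def\<close>)
      then show "(\<Sum>j. f j S) \<le> gen_wealth Q S" using eq by simp
    qed
    then have "barI \<S> (\<lambda>S. \<Sum>j. f j S) \<le> gen_endowment Q" by (rule barI_le[OF Qpg])
    then show "barI \<S> (\<lambda>S. \<Sum>j. f j S) \<le> (\<Sum>j. barI \<S> (f j)) + ereal e" using endQ by simp
  qed
qed


primrec sp :: "(nat \<Rightarrow> sportf) \<Rightarrow> nat \<Rightarrow> sportf" where
  "sp P 0 = P 0" | "sp P (Suc M) = mrg (sp P M) (P (Suc M))"

lemma tw_sp: "twealth (sp P M) S = twealth (P 0) S + (\<Sum>m<M. twealth (P (Suc m)) S)"
  by (induction M) simp_all
lemma endow_sp: "endow (sp P M) = endow (P 0) + (\<Sum>m<M. endow (P (Suc m)))"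
  by (induction M) simp_all
lemma simple_sp: "(\<And>m. simple_portfolio \<S> (P m)) \<Longrightarrow> simple_portfolio \<S> (sp P M)"
  by (induction M) (simp_all add: simple_mrg)

lemma ereal_term_le_suminf:
  fixes f :: "nat \<Rightarrow> ereal" assumes "\<And>j. 0 \<le> f j"
  shows "f i \<le> suminf f"
proof -
  have "f i \<le> (\<Sum>j<i. f j) + f i" by (rule add_increasing) (auto simp: assms sum_nonneg)
  also have "\<dots> = (\<Sum>j<Suc i. f j)" by simp
  also have "\<dots> \<le> suminf f" by (rule suminf_upper) (rule assms)
  finally show ?thesis .
qed

lemma empty_not_null: "\<not> null_set {} A"
proof -
  define P :: "nat \<Rightarrow> sportf" where "P k = (if k = 0 then cstp (-1) else zp)" for k
  have "pos_gen_portfolio {} P"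
    by (auto simp: P_def pos_gen_portfolio_def gen_portfolio_def)
  moreover have "superhedges {} P f" for f by (simp add: superhedges_def)
  ultimately have "barI {} f \<le> gen_endowment P" for f by (rule barI_le)
  moreover have "gen_endowment P = ereal (-1)" by (simp add: gen_endowment_def P_def zero_ereal_def[symmetric])
  ultimately have "barI {} f \<le> ereal (-1)" for f by metis
  then have "barI {} f \<noteq> 0" for f by (metis ereal_less_eq(3) le_minus_one_simps(3) zero_ereal_def)
  then show ?thesis by (simp add: null_set_def snorm_def)
qed


theorem theorem4p5:
  fixes s0 :: real and \<S> :: "traj set"
  assumes "trajectory_set s0 \<S>" and "LOP \<S>" and "condK \<S>"
  shows "\<not> (\<exists>P. arbitrage_null \<S> P)"
proof
  assume "\<exists>P. arbitrage_null \<S> P"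
  then obtain P where gp: "gen_portfolio \<S> P" and e0: "gen_endowment P = 0"
    and nullN: "null_set \<S> {S\<in>\<S>. gen_wealth P S < 0}"
    and notnull: "\<not> null_set \<S> {S\<in>\<S>. gen_wealth P S > 0}"
    unfolding arbitrage_null_def by blast
  have ne: "\<S> \<noteq> {}" using nullN empty_not_null by blast
  define N where "N = {S\<in>\<S>. gen_wealth P S < 0}"
  define V0 where "V0 = endow (P 0)"
  define v where "v m = endow (P (Suc m))" for m
  define \<pi> where "\<pi> m S = twealth (P (Suc m)) S" for m S
  define f where "f S = twealth (P 0) S" for S
  have posm: "positive_portfolio \<S> (P (Suc m))" for m using gp by (simp add: gen_portfolio_def)
  have v0: "0 \<le> v m" for m using posm by (simp add: v_def positive_portfolio_def)
  have pi0: "S \<in> \<S> \<Longrightarrow> 0 \<le> \<pi> m S" for m S using posm by (simp add: \<pi>_def positive_portfolio_def)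
  have simpleP: "simple_portfolio \<S> (P m)" for m
    using gp posm by (cases m) (auto simp: gen_portfolio_def positive_portfolio_def)
  have GW: "gen_wealth P S = ereal (f S) + (\<Sum>m. ereal (\<pi> m S))" for S
    by (simp add: gen_wealth_def f_def \<pi>_def)
  have "ereal V0 + (\<Sum>m. ereal (v m)) = 0" using e0 by (simp add: gen_endowment_def V0_def v_def)
  moreover have "0 \<le> (\<Sum>m. ereal (v m))" by (rule suminf_0_le) (simp add: v0)
  ultimately have sv: "(\<Sum>m. ereal (v m)) = ereal (- V0)"
    by (cases "(\<Sum>m. ereal (v m))") auto
  have "(\<lambda>m. ereal (v m)) sums (\<Sum>m. ereal (v m))"
    by (rule summable_sums, rule summable_ereal_pos) (simp add: v0)
  then have vsums: "v sums (- V0)" using sv by (simp add: sums_ereal)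
  then have vsum: "summable v" and vsuminf: "suminf v = - V0" by (auto simp: sums_iff)
  have bN: "barI \<S> (\<lambda>S. \<bar>indicator N S\<bar>) = 0"
    using nullN by (simp add: N_def null_set_def snorm_def)
  have infN: "barI \<S> (\<lambda>S. if S \<in> N then \<infinity> else 0) \<le> 0"
  proof -
    have "barI \<S> (\<lambda>S. if S \<in> N then \<infinity> else 0) \<le> barI \<S> (\<lambda>S. \<Sum>j. \<bar>indicator N S\<bar>)"
      by (rule barI_mono) (auto simp: indicator_def suminf_one_ereal)
    also have "\<dots> \<le> (\<Sum>j. barI \<S> (\<lambda>S. \<bar>indicator N S\<bar>))"
      by (rule barI_countable[OF ne]) simp
    finally show ?thesis using bN by simp
  qed
  have gplus: "barI \<S> (\<lambda>S. ereal (max 0 (real (Suc k) * twealth (sp P M) S))) \<le> 0" for M k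
  proof -
    define c where "c = real (Suc k)"
    have c0: "0 < c" by (simp add: c_def)
    define G where "G = scl (- c) (sp P M)"
    have sG: "simple_portfolio \<S> G" unfolding G_def by (rule simple_scl) (rule simple_sp[OF simpleP])
    define eM where "eM = V0 + (\<Sum>m<M. v m)"
    define rM where "rM = (\<Sum>j. v (j + M))"
    have er: "eM + rM = 0"
      using suminf_split_initial_segment[OF vsum, of M] vsuminf by (simp add: eM_def rM_def)
    have endG: "endow G = - c * eM" by (simp add: G_def endow_sp eM_def V0_def v_def)
    have twG: "twealth G S = - c * twealth (sp P M) S" for S by (simp add: G_def)
    from assms(3) sG have K: "ereal (endow G) + barI \<S> (\<lambda>S. ereal (max 0 (- twealth G S)))
         \<le> barI \<S> (\<lambda>S. ereal (max 0 (twealth G S)))" unfolding condK_def by blast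
    define tailk where "tailk S = (\<Sum>j. ereal (c * \<pi> (j + M) S))" for S
    define F :: "nat \<Rightarrow> traj \<Rightarrow> ereal" where "F j = (if j = 0 then tailk else (\<lambda>S. if S \<in> N then \<infinity> else 0))" for j
    have tail0: "S \<in> \<S> \<Longrightarrow> 0 \<le> tailk S" for S
      unfolding tailk_def by (rule suminf_0_le) (simp add: c0 pi0 less_imp_le)
    have F0: "S \<in> \<S> \<Longrightarrow> 0 \<le> F j S" for j S by (simp add: F_def tail0)
    define Q :: "nat \<Rightarrow> sportf" where "Q j = (if j = 0 then zp else scl c (P (Suc (j - 1 + M))))" for j
    have Qpg: "pos_gen_portfolio \<S> Q"
      unfolding pos_gen_portfolio_def gen_portfolio_def
    proof (intro conjI allI impI ballI)
      show "simple_portfolio \<S> (Q 0)" by (simp add: Q_def)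
      fix m :: nat assume "1 \<le> m"
      then obtain m' where "m = Suc m'" by (cases m) auto
      then show "positive_portfolio \<S> (Q m)" using posm c0 by (simp add: Q_def pos_scl)
    next
      fix j S show "wealth (Q 0) j S = 0" by (simp add: Q_def)
    qed
    have "summable (\<lambda>j. c * v (j + M))"
      by (rule summable_mult) (rule summable_ignore_initial_segment[OF vsum])
    then have "(\<Sum>j. ereal (c * v (j + M))) = ereal (\<Sum>j. c * v (j + M))" by (rule suminf_ereal')
    also have "(\<Sum>j. c * v (j + M)) = c * rM"
      unfolding rM_def by (rule suminf_mult) (rule summable_ignore_initial_segment[OF vsum])
    finally have "gen_endowment Q = ereal (c * rM)"
      by (simp add: gen_endowment_def Q_def v_def zero_ereal_def[symmetric])
    moreover have "superhedges \<S> Q tailk"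
      by (simp add: superhedges_def gen_wealth_def Q_def tailk_def \<pi>_def zero_ereal_def[symmetric])
    ultimately have btail: "barI \<S> tailk \<le> ereal (c * rM)" using barI_le[OF Qpg] by metis
    have Fsum: "(\<Sum>j. F j S) = tailk S + (if S \<in> N then \<infinity> else 0)" if "S \<in> \<S>" for S
    proof -
      have "(\<Sum>j. F j S) = (\<Sum>j<1. F j S) + (\<Sum>j. F (j + 1) S)"
        by (rule ereal_offset) (rule F0[OF that])
      then show ?thesis by (cases "S \<in> N") (simp_all add: F_def)
    qed
    have "barI \<S> (\<lambda>S. ereal (max 0 (twealth G S))) \<le> barI \<S> (\<lambda>S. \<Sum>j. F j S)"
    proof (rule barI_mono)
      fix S assume S: "S \<in> \<S>"
      show "ereal (max 0 (twealth G S)) \<le> (\<Sum>j. F j S)"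
      proof (cases "S \<in> N")
        case True
        then show ?thesis using Fsum[OF S] tail0[OF S] by simp
      next
        case False
        then have W0: "0 \<le> gen_wealth P S" using S by (auto simp: N_def)
        define T1 where "T1 = (\<Sum>j. ereal (\<pi> (j + M) S))"
        have T10: "0 \<le> T1" unfolding T1_def by (rule suminf_0_le) (simp add: pi0 S)
        have "(\<Sum>m. ereal (\<pi> m S)) = (\<Sum>m<M. ereal (\<pi> m S)) + T1"
          unfolding T1_def by (rule ereal_offset) (simp add: pi0 S)
        then have "gen_wealth P S = ereal (twealth (sp P M) S) + T1"
          by (simp add: GW tw_sp f_def \<pi>_def) (metis add.assoc plus_ereal.simps(1))
        with W0 have A: "0 \<le> ereal (twealth (sp P M) S) + T1" by simp
        have "tailk S = ereal c * T1"
          unfolding tailk_def T1_def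
          by (subst suminf_cmult_ereal[symmetric]) (simp_all add: pi0 S c0 less_imp_le)
        moreover have "ereal (max 0 (twealth G S)) \<le> ereal c * T1"
        proof (cases T1)
          case (real t)
          have "0 \<le> c * (t + twealth (sp P M) S)" using A real c0 by (intro mult_nonneg_nonneg) auto
          then show ?thesis using real c0 T10 by (simp add: twG algebra_simps)
        next
          case PInf then show ?thesis using c0 by simp
        next
          case MInf then show ?thesis using T10 by simp
        qed
        ultimately show ?thesis using Fsum[OF S] False by simp
      qed
    qed
    also have "\<dots> \<le> (\<Sum>j. barI \<S> (F j))"
      by (rule barI_countable[OF ne]) (rule F0)
    also have "\<dots> \<le> (\<Sum>j. if j = 0 then barI \<S> tailk else 0)"
    proof (rule suminf_le_pos)
      fix j show "barI \<S> (F j) \<le> (if j = 0 then barI \<S> tailk else 0)"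
        using infN by (simp add: F_def)
      show "0 \<le> barI \<S> (F j)" by (rule barI_nonneg[OF ne])
    qed
    also have "\<dots> = barI \<S> tailk"
      by (subst suminf_finite[where N="{0}"]) auto
    finally have bminus: "barI \<S> (\<lambda>S. ereal (max 0 (twealth G S))) \<le> ereal (c * rM)"
      using btail by simp
    have "ereal (- c * eM) + barI \<S> (\<lambda>S. ereal (max 0 (- twealth G S))) \<le> ereal (c * rM)"
      using K bminus endG by simp
    moreover have "(\<lambda>S. ereal (max 0 (- twealth G S))) = (\<lambda>S. ereal (max 0 (real (Suc k) * twealth (sp P M) S)))"
      by (simp add: twG c_def algebra_simps)
    moreover have "c * rM + c * eM = 0" using er by (simp add: algebra_simps flip: distrib_left)
    moreover have "0 \<le> barI \<S> (\<lambda>S. ereal (max 0 (real (Suc k) * twealth (sp P M) S)))"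
      by (rule barI_nonneg[OF ne])
    ultimately show ?thesis
      by (cases "barI \<S> (\<lambda>S. ereal (max 0 (real (Suc k) * twealth (sp P M) S)))") auto
  qed
  define Pos where "Pos = {S\<in>\<S>. gen_wealth P S > 0}"
  define gp where "gp i S = ereal (max 0 (real (Suc (snd (prod_decode i))) * twealth (sp P (fst (prod_decode i))) S))" for i S
  have gp0: "0 \<le> gp i S" for i S by (auto simp: gp_def max_def)
  have "barI \<S> (\<lambda>S. \<bar>indicator Pos S\<bar>) \<le> barI \<S> (\<lambda>S. \<Sum>i. gp i S)"
  proof (rule barI_mono)
    fix S assume S: "S \<in> \<S>"
    show "\<bar>indicator Pos S\<bar> \<le> (\<Sum>i. gp i S)"
    proof (cases "S \<in> Pos")
      case False then show ?thesis by (simp add: suminf_0_le gp0)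
    next
      case True
      then have "0 < ereal (f S) + (\<Sum>m. ereal (\<pi> m S))" by (simp add: Pos_def GW)
      then have "ereal (- f S) < (\<Sum>m. ereal (\<pi> m S))"
        by (cases "(\<Sum>m. ereal (\<pi> m S))") auto
      also have "(\<Sum>m. ereal (\<pi> m S)) = (SUP n. \<Sum>m<n. ereal (\<pi> m S))"
        by (rule suminf_ereal_eq_SUP) (simp add: pi0 S)
      finally obtain M where "ereal (- f S) < (\<Sum>m<M. ereal (\<pi> m S))"
        by (auto simp: less_SUP_iff)
      then have xpos: "0 < twealth (sp P M) S" by (simp add: tw_sp f_def \<pi>_def)
      obtain k :: nat where "1 / twealth (sp P M) S < real k" using reals_Archimedean2 by blast
      then have "1 \<le> real (Suc k) * twealth (sp P M) S"
        using xpos by (simp add: field_simps)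
      then have "1 \<le> gp (prod_encode (M, k)) S" by (simp add: gp_def)
      also have "\<dots> \<le> (\<Sum>i. gp i S)" by (rule ereal_term_le_suminf) (rule gp0)
      finally show ?thesis using True by simp
    qed
  qed
  also have "\<dots> \<le> (\<Sum>i. barI \<S> (gp i))"
    by (rule barI_countable[OF ne]) (rule gp0)
  also have "\<dots> \<le> (\<Sum>i. 0)"
  proof (rule suminf_le_pos)
    fix N show "barI \<S> (gp N) \<le> 0" unfolding gp_def by (rule gplus)
    show "0 \<le> barI \<S> (gp N)" by (rule barI_nonneg[OF ne])
  qed
  finally have "barI \<S> (\<lambda>S. \<bar>indicator Pos S\<bar>) \<le> 0" by simp
  moreover have "0 \<le> barI \<S> (\<lambda>S. \<bar>indicator Pos S\<bar>)" by (rule barI_nonneg[OF ne])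
  ultimately have "null_set \<S> Pos" by (simp add: null_set_def snorm_def Pos_def)
  with notnull show False by (simp add: Pos_def)
qed

end
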